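(* For every (convex) polytope $P\subset\mathbb{R}^d$ with vertex set $V(P)$, we have $f(P)=f(V(P))$.
   Context: For a bounded set $S\subset\mathbb{R}^d$ with the Euclidean distance, its Borsuk number $f(S)$ is the minimum number of parts in a partition of $S$ in which every part has diameter strictly smaller than the diameter of $S$ (with $f(S)=+\infty$ if no such partition exists, e.g. when $S$ is a single point). *)

theory Defs
  imports "HOL-Analysis.Analysis" "HOL-Library.Extended_Nat" "HOL-Library.Disjoint_Sets"
begin

text \<open>Borsuk number: minimal number of parts of a partition of S into parts of
diameter strictly smaller than diameter S; infinity (INF of the empty set) if none exists.\<close>
definition borsuk_number :: "'a::metric_space set \<Rightarrow> enat" where
  "borsuk_number S =
     (INF n \<in> {n. \<exists>\<P>. partition_on S \<P> \<and> finite \<P> \<and> card \<P> = n \<and>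
                     (\<forall>A\<in>\<P>. diameter A < diameter S)}. enat n)"

end

theory Submission
  imports Defs
begin

lemma comb_dist:
  fixes V :: "'a::real_normed_vector set"
  assumes "finite V" "\<forall>v\<in>V. 0 \<le> u v" "sum u V = 1" "\<forall>v\<in>V. 0 \<le> w v" "sum w V = 1"
  shows "dist (\<Sum>v\<in>V. u v *\<^sub>R v) (\<Sum>v\<in>V. w v *\<^sub>R v) \<le> (\<Sum>v\<in>V. \<Sum>x\<in>V. u v * w x * dist v x)"
proof -
  have e1: "(\<Sum>v\<in>V. u v *\<^sub>R v) = (\<Sum>v\<in>V. \<Sum>x\<in>V. (u v * w x) *\<^sub>R v)"
    by (simp add: scaleR_sum_left[symmetric] sum_distrib_left[symmetric] assms)
  have e2: "(\<Sum>x\<in>V. w x *\<^sub>R x) = (\<Sum>v\<in>V. \<Sum>x\<in>V. (u v * w x) *\<^sub>R x)"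
    apply (subst sum.swap)
    by (simp add: scaleR_sum_left[symmetric] sum_distrib_right[symmetric] assms mult.commute)
  have "(\<Sum>v\<in>V. u v *\<^sub>R v) - (\<Sum>v\<in>V. w v *\<^sub>R v) = (\<Sum>v\<in>V. \<Sum>x\<in>V. (u v * w x) *\<^sub>R (v - x))"
    unfolding e1 e2 by (simp add: sum_subtractf scaleR_diff_right)
  then have "dist (\<Sum>v\<in>V. u v *\<^sub>R v) (\<Sum>v\<in>V. w v *\<^sub>R v) = norm (\<Sum>v\<in>V. \<Sum>x\<in>V. (u v * w x) *\<^sub>R (v - x))"
    by (simp add: dist_norm)
  also have "\<dots> \<le> (\<Sum>v\<in>V. norm (\<Sum>x\<in>V. (u v * w x) *\<^sub>R (v - x)))" by (rule norm_sum)
  also have "\<dots> \<le> (\<Sum>v\<in>V. \<Sum>x\<in>V. norm ((u v * w x) *\<^sub>R (v - x)))"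
    by (intro sum_mono norm_sum)
  also have "\<dots> = (\<Sum>v\<in>V. \<Sum>x\<in>V. u v * w x * dist v x)"
    by (intro sum.cong refl) (simp add: assms dist_norm)
  finally show ?thesis .
qed

lemma comb_bound:
  fixes V :: "'a::real_normed_vector set"
  assumes "finite V" "\<forall>v\<in>V. 0 \<le> u v" "sum u V = 1" "\<forall>v\<in>V. 0 \<le> w v" "sum w V = 1"
    and "A \<subseteq> V" and DV: "\<forall>v\<in>V. \<forall>x\<in>V. dist v x \<le> D" and dA: "\<forall>v\<in>A. \<forall>x\<in>A. dist v x \<le> d"
    and "d \<le> D"
  shows "dist (\<Sum>v\<in>V. u v *\<^sub>R v) (\<Sum>v\<in>V. w v *\<^sub>R v) \<le> D - (D - d) * sum u A * sum w A"
proof -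
  let ?a = "\<lambda>v. if v \<in> A then u v else 0"
  let ?b = "\<lambda>v. if v \<in> A then w v else 0"
  have pt: "u v * w x * dist v x \<le> u v * w x * D - (D - d) * (?a v * ?b x)" if "v \<in> V" "x \<in> V" for v x
  proof (cases "v \<in> A \<and> x \<in> A")
    case True
    have "u v * w x * dist v x \<le> u v * w x * d"
      using True dA assms that by (intro mult_left_mono) auto
    then show ?thesis using True by (simp add: algebra_simps)
  next
    case False
    have "u v * w x * dist v x \<le> u v * w x * D"
      using DV assms that by (intro mult_left_mono) auto
    then show ?thesis using False by auto
  qed
  have "dist (\<Sum>v\<in>V. u v *\<^sub>R v) (\<Sum>v\<in>V. w v *\<^sub>R v) \<le> (\<Sum>v\<in>V. \<Sum>x\<in>V. u v * w x * dist v x)"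
    using comb_dist assms by blast
  also have "\<dots> \<le> (\<Sum>v\<in>V. \<Sum>x\<in>V. u v * w x * D - (D - d) * (?a v * ?b x))"
    using pt by (intro sum_mono) auto
  also have "\<dots> = (\<Sum>v\<in>V. \<Sum>x\<in>V. u v * w x * D) - (D - d) * (\<Sum>v\<in>V. \<Sum>x\<in>V. ?a v * ?b x)"
    by (simp add: sum_subtractf sum_distrib_left)
  also have "(\<Sum>v\<in>V. \<Sum>x\<in>V. u v * w x * D) = D"
    by (simp add: sum_distrib_left[symmetric] sum_distrib_right[symmetric] assms)
  also have "(\<Sum>v\<in>V. \<Sum>x\<in>V. ?a v * ?b x) = sum ?a V * sum ?b V"
    by (simp add: sum_product)
  also have "sum ?a V = sum u A"
    using assms by (simp add: sum.If_cases Int_absorb1 Int_absorb2)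
  also have "sum ?b V = sum w A"
    using assms by (simp add: sum.If_cases Int_absorb1 Int_absorb2)
  finally show ?thesis by (simp add: mult.assoc)
qed

lemma hull_rep:
  fixes V :: "'a::real_normed_vector set"
  assumes "finite V"
  obtains U where "\<And>x. x \<in> convex hull V \<Longrightarrow> (\<forall>v\<in>V. 0 \<le> U x v) \<and> sum (U x) V = 1 \<and> (\<Sum>v\<in>V. U x v *\<^sub>R v) = x"
proof -
  have "\<forall>x\<in>convex hull V. \<exists>u. (\<forall>v\<in>V. 0 \<le> u v) \<and> sum u V = 1 \<and> (\<Sum>v\<in>V. u v *\<^sub>R v) = x"
    using convex_hull_finite[OF assms] by blast
  then show ?thesis using that by metis
qed

lemma diameter_hull:
  fixes V :: "'a::real_normed_vector set"
  assumes "finite V"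
  shows "diameter (convex hull V) = diameter V"
proof (rule antisym)
  obtain U where U: "\<And>x. x \<in> convex hull V \<Longrightarrow> (\<forall>v\<in>V. 0 \<le> U x v) \<and> sum (U x) V = 1 \<and> (\<Sum>v\<in>V. U x v *\<^sub>R v) = x"
    using hull_rep[OF assms] by blast
  have bV: "bounded V" using assms by (simp add: finite_imp_bounded)
  show "diameter (convex hull V) \<le> diameter V"
  proof (rule diameter_le)
    show "convex hull V \<noteq> {} \<or> 0 \<le> diameter V" using diameter_ge_0[OF bV] by auto
    fix x y assume xy: "x \<in> convex hull V" "y \<in> convex hull V"
    have "dist (\<Sum>v\<in>V. U x v *\<^sub>R v) (\<Sum>v\<in>V. U y v *\<^sub>R v) \<le> diameter V - (diameter V - diameter V) * sum (U x) {} * sum (U y) {}"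
      apply (rule comb_bound[where A="{}"])
      using U[OF xy(1)] U[OF xy(2)] assms diameter_bounded_bound[OF bV] by auto
    then show "norm (x - y) \<le> diameter V" using U[OF xy(1)] U[OF xy(2)] by (simp add: dist_norm)
  qed
  show "diameter V \<le> diameter (convex hull V)"
    by (rule diameter_subset) (auto simp: hull_subset assms finite_imp_bounded_convex_hull)
qed

lemma hull_part:
  fixes V :: "'a::real_normed_vector set"
  assumes fin: "finite V" and part: "partition_on V Q" and finQ: "finite Q"
    and dia: "\<forall>A\<in>Q. diameter A < diameter V"
  shows "\<exists>R. partition_on (convex hull V) R \<and> finite R \<and> card R \<le> card Q \<and>
             (\<forall>B\<in>R. diameter B < diameter (convex hull V))"
proof (cases "V = {}")
  case True
  then show ?thesis by (intro exI[of _ "{}"]) (auto simp: partition_on_empty)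
next
  case False
  define D where "D = diameter V"
  define k where "k = card Q"
  have UQ: "\<Union>Q = V" and dQ: "disjoint Q" and eQ: "{} \<notin> Q"
    using part by (auto simp: partition_on_def)
  have "Q \<noteq> {}" using False UQ by auto
  then have kpos: "k > 0" using finQ by (simp add: k_def card_gt_0_iff)
  have bV: "bounded V" using fin by (simp add: finite_imp_bounded)
  have DV: "\<forall>v\<in>V. \<forall>x\<in>V. dist v x \<le> D" using diameter_bounded_bound[OF bV] D_def by auto
  have AV: "A \<subseteq> V" if "A \<in> Q" for A using UQ that by auto
  obtain U where U: "\<And>x. x \<in> convex hull V \<Longrightarrow> (\<forall>v\<in>V. 0 \<le> U x v) \<and> sum (U x) V = 1 \<and> (\<Sum>v\<in>V. U x v *\<^sub>R v) = x"
    using hull_rep[OF fin] by blast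
  have ex: "\<exists>A\<in>Q. 1 / real k \<le> sum (U x) A" if x: "x \<in> convex hull V" for x
  proof (rule ccontr)
    assume "\<not> ?thesis"
    then have lt: "\<forall>A\<in>Q. sum (U x) A < 1 / real k" by auto
    have "1 = sum (U x) V" using U[OF x] by simp
    also have "\<dots> = (\<Sum>A\<in>Q. sum (U x) A)"
      unfolding UQ[symmetric]
      using sum.Union_disjoint[simplified, of Q "U x"] finQ fin AV dQ
      by (metis disjointD finite_subset)
    also have "\<dots> < (\<Sum>A\<in>Q. 1 / real k)"
      using lt \<open>Q \<noteq> {}\<close> finQ by (intro sum_strict_mono) auto
    also have "\<dots> = 1" using kpos by (simp add: k_def)
    finally show False by simp
  qed
  obtain G where G: "\<And>x. x \<in> convex hull V \<Longrightarrow> G x \<in> Q \<and> 1 / real k \<le> sum (U x) (G x)"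
    using ex by metis
  define f where "f A = {x \<in> convex hull V. G x = A}" for A
  define R where "R = f ` Q - {{}}"
  have "partition_on (convex hull V) R"
    unfolding partition_on_def
  proof (intro conjI)
    show "\<Union>R = convex hull V"
      using G by (auto simp: R_def f_def)
    show "disjoint R"
      unfolding R_def disjoint_def f_def by auto
    show "{} \<notin> R" by (simp add: R_def)
  qed
  moreover have "finite R" using finQ by (simp add: R_def)
  moreover have "card R \<le> card Q"
    unfolding R_def using finQ by (meson card_Diff_subset card_image_le finite_imageI le_trans Diff_subset card_mono)
  moreover have "diameter B < diameter (convex hull V)" if B: "B \<in> R" for B
  proof -
    obtain A where A: "A \<in> Q" "B = f A" "B \<noteq> {}" using B by (auto simp: R_def)
    define d where "d = diameter A"
    have bA: "bounded A" using AV[OF A(1)] bV bounded_subset by blast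
    have dA: "\<forall>v\<in>A. \<forall>x\<in>A. dist v x \<le> d" using diameter_bounded_bound[OF bA] d_def by auto
    have dD: "d < D" using dia A(1) by (simp add: d_def D_def)
    have "diameter B \<le> D - (D - d) * (1 / real k) * (1 / real k)"
    proof (rule diameter_le)
      show "B \<noteq> {} \<or> 0 \<le> D - (D - d) * (1 / real k) * (1 / real k)" using A by auto
      fix x y assume xy: "x \<in> B" "y \<in> B"
      then have xh: "x \<in> convex hull V" and yh: "y \<in> convex hull V" and gx: "G x = A" and gy: "G y = A"
        using A by (auto simp: f_def)
      have "dist (\<Sum>v\<in>V. U x v *\<^sub>R v) (\<Sum>v\<in>V. U y v *\<^sub>R v) \<le> D - (D - d) * sum (U x) A * sum (U y) A"
        by (rule comb_bound) (use U[OF xh] U[OF yh] fin AV[OF A(1)] DV dA dD in auto)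
      also have "\<dots> \<le> D - (D - d) * (1 / real k) * (1 / real k)"
      proof -
        have "1 / real k \<le> sum (U x) A" "1 / real k \<le> sum (U y) A" using G[OF xh] G[OF yh] gx gy by auto
        moreover have "0 \<le> 1 / real k" by simp
        ultimately have kk: "(1 / real k) * (1 / real k) \<le> sum (U x) A * sum (U y) A"
          by (meson mult_mono order_trans)
        show ?thesis using mult_left_mono[OF kk, of "D-d"] dD by (simp add: mult.assoc)
      qed
      finally show "norm (x - y) \<le> D - (D - d) * (1 / real k) * (1 / real k)"
        using U[OF xh] U[OF yh] by (simp add: dist_norm)
    qed
    also have "\<dots> < D" using dD kpos by simp
    finally show ?thesis using diameter_hull[OF fin] D_def by simp
  qed
  ultimately show ?thesis by blast
qed

lemma restrict_part:
  fixes S :: "'a::metric_space set"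
  assumes "partition_on S R" "finite R" "T \<subseteq> S" "bounded S"
    "\<forall>B\<in>R. diameter B < diameter S" "diameter T = diameter S"
  shows "\<exists>Q. partition_on T Q \<and> finite Q \<and> card Q \<le> card R \<and> (\<forall>A\<in>Q. diameter A < diameter T)"
proof (intro exI conjI)
  show "partition_on T ((\<inter>) T ` R - {{}})"
    using partition_on_restrict[OF assms(1), of T] assms(3) by (simp add: Int_absorb2)
  show "finite ((\<inter>) T ` R - {{}})" using assms by simp
  show "card ((\<inter>) T ` R - {{}}) \<le> card R"
    using assms(2) by (meson card_Diff_subset card_image_le finite_imageI le_trans Diff_subset card_mono)
  show "\<forall>A\<in>(\<inter>) T ` R - {{}}. diameter A < diameter T"
  proof
    fix A assume "A \<in> (\<inter>) T ` R - {{}}"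
    then obtain B where B: "B \<in> R" "A = T \<inter> B" by auto
    have "B \<subseteq> S" using B assms(1) by (auto simp: partition_on_def)
    then have "bounded B" using assms(4) bounded_subset by blast
    then have "diameter A \<le> diameter B" using B by (intro diameter_subset) auto
    then show "diameter A < diameter T" using assms(5,6) B by force
  qed
qed

lemma borsuk_le:
  fixes S T :: "'a::metric_space set"
  assumes "\<And>Q. partition_on S Q \<Longrightarrow> finite Q \<Longrightarrow> \<forall>A\<in>Q. diameter A < diameter S \<Longrightarrow>
     \<exists>R. partition_on T R \<and> finite R \<and> card R \<le> card Q \<and> (\<forall>B\<in>R. diameter B < diameter T)"
  shows "borsuk_number T \<le> borsuk_number S"
  unfolding borsuk_number_def
proof (rule INF_greatest)
  fix n assume "n \<in> {n. \<exists>\<P>. partition_on S \<P> \<and> finite \<P> \<and> card \<P> = n \<and> (\<forall>A\<in>\<P>. diameter A < diameter S)}"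
  then obtain Q where Q: "partition_on S Q" "finite Q" "card Q = n" "\<forall>A\<in>Q. diameter A < diameter S" by auto
  obtain R where R: "partition_on T R" "finite R" "card R \<le> card Q" "\<forall>B\<in>R. diameter B < diameter T"
    using assms[OF Q(1,2,4)] by blast
  show "(INF n \<in> {n. \<exists>\<P>. partition_on T \<P> \<and> finite \<P> \<and> card \<P> = n \<and> (\<forall>A\<in>\<P>. diameter A < diameter T)}. enat n) \<le> enat n"
    by (rule INF_lower2[where i="card R"]) (use R Q in auto)
qed

theorem proposition2p1:
  fixes P :: "'a::euclidean_space set"
  assumes "polytope P"
  shows "borsuk_number P = borsuk_number {v. v extreme_point_of P}"
proof -
  obtain W where W: "finite W" "P = convex hull W" using assms by (auto simp: polytope_def)
  define V where "V = {v. v extreme_point_of P}"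
  have finV: "finite V" using W extreme_points_of_convex_hull[of W] V_def finite_subset by metis
  have PV: "P = convex hull V"
    using Krein_Milman_polytope[OF W(1)] W(2) V_def by simp
  show ?thesis
    unfolding V_def[symmetric]
  proof (rule antisym)
    show "borsuk_number P \<le> borsuk_number V"
      unfolding PV by (rule borsuk_le, rule hull_part[OF finV]) auto
    show "borsuk_number V \<le> borsuk_number P"
    proof (rule borsuk_le)
      fix Q assume "partition_on P Q" "finite Q" "\<forall>A\<in>Q. diameter A < diameter P"
      then show "\<exists>R. partition_on V R \<and> finite R \<and> card R \<le> card Q \<and> (\<forall>B\<in>R. diameter B < diameter V)"
        by (intro restrict_part[of P Q V]) (auto simp: PV hull_subset finite_imp_bounded_convex_hull finV diameter_hull)
    qed
  qed
qed

end
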